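(* Let $V=\{v_1,\dots,v_n\}$ be the cities of a symmetric TSP instance on the complete graph $K_n$ with nonnegative edge weights $w$. Let $I$ (white edges) and $X$ (excluded edges) be disjoint sets of edges, and let $g$ be a Hamiltonian cycle on $V$ that contains every edge of $I$ and no edge of $X$. Then the weight of the constrained MST with respect to $(I,X)$ is at most the weight $w(g)=\sum_{e\in g}w(e)$.
   Context: The constrained MST with respect to $(I,X)$ is the spanning tree of $\{v_2,\dots,v_n\}$ produced by Prim's algorithm on the complete graph on $\{v_2,\dots,v_n\}$ in which all edges of $X$ are discarded and any edge of $I$ crossing the current cut is given the highest priority (selected before any edge not in $I$), the remaining candidate edges being ranked by weight. Its weight is the sum of the weights of its edges. In the paper's setting, $I$ and $X$ are the white and excluded edges of a Stem-and-Cycle configuration $c$ in an ejection chain, and $g$ is the goal tour toward which these constraints lead, which therefore contains all of $I$ and none of $X$. *)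

theory Defs
  imports Complex_Main
begin

definition edges_of :: "'a set \<Rightarrow> 'a set set" where
  "edges_of V = {{u, v} | u v. u \<in> V \<and> v \<in> V \<and> u \<noteq> v}"

definition ham_cycle :: "'a set \<Rightarrow> 'a list \<Rightarrow> bool" where
  "ham_cycle V c \<longleftrightarrow> distinct c \<and> set c = V \<and> length c \<ge> 3"

definition cycle_edges :: "'a list \<Rightarrow> 'a set set" where
  "cycle_edges c = {{c ! i, c ! ((i + 1) mod length c)} | i. i < length c}"

text \<open>Runs of the constrained Prim algorithm on the complete graph on W, started at r:
  edges of X are discarded; an edge of I crossing the cut is taken before any edge
  not in I; otherwise a minimum-weight crossing non-excluded edge is taken.
  prim_reach W I X w r S T: after some steps the tree has vertex set S and edge set T.\<close>
inductive prim_reach ::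
  "'a set \<Rightarrow> 'a set set \<Rightarrow> 'a set set \<Rightarrow> ('a set \<Rightarrow> real) \<Rightarrow> 'a \<Rightarrow> 'a set \<Rightarrow> 'a set set \<Rightarrow> bool"
  for W I X w r where
  start: "r \<in> W \<Longrightarrow> prim_reach W I X w r {r} {}"
| step: "\<lbrakk> prim_reach W I X w r S T; u \<in> S; v \<in> W - S; {u, v} \<notin> X;
           {u, v} \<in> I \<or>
           (\<forall>a\<in>S. \<forall>b\<in>W - S. {a, b} \<notin> X \<longrightarrow> {a, b} \<notin> I \<and> w {u, v} \<le> w {a, b}) \<rbrakk>
         \<Longrightarrow> prim_reach W I X w r (insert v S) (insert {u, v} T)"

definition constrained_mst ::
  "'a set \<Rightarrow> 'a set set \<Rightarrow> 'a set set \<Rightarrow> ('a set \<Rightarrow> real) \<Rightarrow> 'a set set \<Rightarrow> bool" where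
  "constrained_mst W I X w T \<longleftrightarrow> (\<exists>r. prim_reach W I X w r W T)"

end

theory Submission imports Defs begin

definition pinv :: "nat set \<Rightarrow> nat set \<Rightarrow> bool" where
  "pinv A F \<longleftrightarrow> finite F \<and> (\<forall>i\<in>F. \<exists>a\<in>A. i < a) \<and>
     (\<forall>a\<in>A. card {i\<in>F. i < a} + 1 = card {j\<in>A. j \<le> a})"

lemma cF_Suc: "finite F \<Longrightarrow> card {i\<in>F. i < Suc x} = card {i\<in>F. i < x} + (if x \<in> F then 1 else 0)"
proof -
  assume F: "finite F"
  have "{i\<in>F. i < Suc x} = (if x \<in> F then insert x {i\<in>F. i < x} else {i\<in>F. i < x})"
    by (auto simp: less_Suc_eq)
  then show ?thesis using F by auto
qed

lemma cF_mono: "finite (F::nat set) \<Longrightarrow> a \<le> b \<Longrightarrow> card {i\<in>F. i < a} \<le> card {i\<in>F. i < b}"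
  by (rule card_mono) (auto intro: less_le_trans)

lemma cF_ins: "finite F \<Longrightarrow> f \<notin> F \<Longrightarrow>
   card {i\<in>insert f F. i < a} = card {i\<in>F. i < a} + (if f < a then 1 else 0)"
proof -
  assume F: "finite F" "f \<notin> F"
  have "{i\<in>insert f F. i < a} = (if f < a then insert f {i\<in>F. i < a} else {i\<in>F. i < a})"
    by auto
  then show ?thesis using F by auto
qed

lemma cA_ins: "finite A \<Longrightarrow> q \<notin> A \<Longrightarrow>
   card {j\<in>insert q A. j \<le> a} = card {j\<in>A. j \<le> a} + (if q \<le> a then 1 else 0)"
proof -
  assume F: "finite A" "q \<notin> A"
  have "{j\<in>insert q A. j \<le> a} = (if q \<le> a then insert q {j\<in>A. j \<le> a} else {j\<in>A. j \<le> a})"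
    by auto
  then show ?thesis using F by auto
qed

lemma pinv_insert:
  assumes inv: "pinv A F" and A: "finite A" and q: "q \<notin> A" and f: "f \<notin> F"
    and below: "\<exists>a\<in>insert q A. f < a"
    and ord: "\<forall>a\<in>A. (f < a) = (q < a)"
    and cq: "card {i\<in>F. i < q} + (if f < q then 1 else 0) = card {j\<in>A. j \<le> q}"
  shows "pinv (insert q A) (insert f F)"
proof -
  have fin: "finite F" using inv by (simp add: pinv_def)
  show ?thesis unfolding pinv_def
  proof (intro conjI ballI)
    show "finite (insert f F)" using fin by simp
  next
    fix i assume "i \<in> insert f F"
    then show "\<exists>a\<in>insert q A. i < a" using below inv by (auto simp: pinv_def)
  next
    fix a assume a: "a \<in> insert q A"
    show "card {i \<in> insert f F. i < a} + 1 = card {j \<in> insert q A. j \<le> a}"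
    proof (cases "a = q")
      case True
      then show ?thesis using cq cF_ins[OF fin f] cA_ins[OF A q] by simp
    next
      case False
      then have aA: "a \<in> A" using a by simp
      have "card {i\<in>F. i < a} + 1 = card {j\<in>A. j \<le> a}" using inv aA by (simp add: pinv_def)
      moreover have "(f < a) = (q < a)" using ord aA by blast
      moreover have "(q < a) = (q \<le> a)" using False by auto
      ultimately show ?thesis unfolding cF_ins[OF fin f] cA_ins[OF A q] by presburger
    qed
  qed
qed

lemma comb:
  assumes inv: "pinv A F" and A: "finite A" "A \<noteq> {}" and q: "q \<notin> A"
  shows "\<exists>f. f \<notin> F \<and> pinv (insert q A) (insert f F) \<and> (f \<in> A) \<noteq> (Suc f \<in> A)
     \<and> (\<exists>a\<in>insert q A. f < a)
     \<and> (\<forall>j. j \<notin> F \<and> ((j \<in> A \<and> Suc j = q) \<or> (j = q \<and> Suc j \<in> A)) \<longrightarrow> f = j)"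
proof -
  have fin: "finite F" using inv by (simp add: pinv_def)
  have invb: "\<And>i. i \<in> F \<Longrightarrow> \<exists>a\<in>A. i < a" using inv by (simp add: pinv_def)
  have invc: "\<And>a. a \<in> A \<Longrightarrow> card {i\<in>F. i < a} + 1 = card {j\<in>A. j \<le> a}"
    using inv by (simp add: pinv_def)
  consider (hi) "\<forall>a\<in>A. a < q" | (lo) "\<forall>a\<in>A. q < a"
    | (mid) "\<exists>a\<in>A. a < q" "\<exists>b\<in>A. q < b"
    using q by (metis linorder_neqE_nat)
  then show ?thesis
  proof cases
    case hi
    define f where "f = Max A"
    have fA: "f \<in> A" and fmax: "\<And>a. a \<in> A \<Longrightarrow> a \<le> f" using A by (auto simp: f_def)
    have fq: "f < q" using hi fA by auto
    have F1: "{i\<in>F. i < f} = F" using invb fmax by fastforce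
    have F2: "{i\<in>F. i < q} = F" using invb fmax hi by fastforce
    have A1: "{j\<in>A. j \<le> f} = A" using fmax by auto
    have A2: "{j\<in>A. j \<le> q} = A" using hi by fastforce
    have fF: "f \<notin> F" using invb fmax by fastforce
    have "pinv (insert q A) (insert f F)"
    proof (rule pinv_insert[OF inv A(1) q fF])
      show "\<exists>a\<in>insert q A. f < a" using fq by auto
      show "\<forall>a\<in>A. (f < a) = (q < a)" using fmax hi by force
      show "card {i\<in>F. i < q} + (if f < q then 1 else 0) = card {j\<in>A. j \<le> q}"
        using invc[OF fA] F1 F2 A1 A2 fq by simp
    qed
    moreover have "Suc f \<notin> A" using fmax by fastforce
    moreover have "\<forall>j. j \<notin> F \<and> ((j \<in> A \<and> Suc j = q) \<or> (j = q \<and> Suc j \<in> A)) \<longrightarrow> f = j"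
      using fmax fq hi by fastforce
    ultimately show ?thesis using fF fA fq by blast
  next
    case lo
    define \<mu> where "\<mu> = Min A"
    have mA: "\<mu> \<in> A" and mmin: "\<And>a. a \<in> A \<Longrightarrow> \<mu> \<le> a" using A by (auto simp: \<mu>_def)
    have qm: "q < \<mu>" using lo mA by auto
    define f where "f = \<mu> - 1"
    have mf: "\<mu> = Suc f" using qm by (simp add: f_def)
    have "{j\<in>A. j \<le> \<mu>} = {\<mu>}" using mA mmin by fastforce
    then have "card {i\<in>F. i < \<mu>} = 0" using invc[OF mA] by simp
    then have F0: "{i\<in>F. i < \<mu>} = {}" using fin by simp
    have fF: "f \<notin> F" using F0 mf by auto
    have Fq: "{i\<in>F. i < q} = {}" using F0 qm by auto
    have Aq: "{j\<in>A. j \<le> q} = {}" using lo by fastforce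
    have "pinv (insert q A) (insert f F)"
    proof (rule pinv_insert[OF inv A(1) q fF])
      show "\<exists>a\<in>insert q A. f < a" using mA mf by auto
      show "\<forall>a\<in>A. (f < a) = (q < a)" using mmin lo mf by fastforce
      show "card {i\<in>F. i < q} + (if f < q then 1 else 0) = card {j\<in>A. j \<le> q}"
        unfolding Fq Aq using qm mf by simp
    qed
    moreover have "f \<notin> A" using mmin mf by fastforce
    moreover have "\<forall>j. j \<notin> F \<and> ((j \<in> A \<and> Suc j = q) \<or> (j = q \<and> Suc j \<in> A)) \<longrightarrow> f = j"
    proof (intro allI impI)
      fix j assume j: "j \<notin> F \<and> ((j \<in> A \<and> Suc j = q) \<or> (j = q \<and> Suc j \<in> A))"
      then have "j = q" "Suc q \<in> A" using lo by auto
      then show "f = j" using mmin[of "Suc q"] qm mf by simp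
    qed
    ultimately show ?thesis using fF mA mf by auto
  next
    case mid
    define L where "L = {a\<in>A. a < q}"
    define R where "R = {b\<in>A. q < b}"
    have L: "finite L" "L \<noteq> {}" using mid A by (auto simp: L_def)
    have R: "finite R" "R \<noteq> {}" using mid A by (auto simp: R_def)
    define a0 where "a0 = Max L"
    define b0 where "b0 = Min R"
    have a0A: "a0 \<in> A" and a0q: "a0 < q" using Max_in[OF L] by (auto simp: a0_def L_def)
    have a0max: "\<And>a. a \<in> A \<Longrightarrow> a < q \<Longrightarrow> a \<le> a0" using L by (auto simp: a0_def L_def)
    have b0A: "b0 \<in> A" and b0q: "q < b0" using Min_in[OF R] by (auto simp: b0_def R_def)
    have b0min: "\<And>b. b \<in> A \<Longrightarrow> q < b \<Longrightarrow> b0 \<le> b" using R by (auto simp: b0_def R_def)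
    have gap: "\<And>a. a \<in> A \<Longrightarrow> a \<le> a0 \<or> b0 \<le> a"
      using a0max b0min q by (metis linorder_neqE_nat)
    have cAq: "{j\<in>A. j \<le> q} = {j\<in>A. j \<le> a0}" using gap a0q b0q by fastforce
    have cAb: "{j\<in>A. j \<le> b0} = insert b0 {j\<in>A. j \<le> a0}" using gap a0q b0q b0A by fastforce
    have "card {j\<in>A. j \<le> b0} = card {j\<in>A. j \<le> a0} + 1"
      unfolding cAb using A a0q b0q by simp
    then have cFb: "card {i\<in>F. i < b0} = card {i\<in>F. i < a0} + 1"
      using invc[OF a0A] invc[OF b0A] by simp
    have m1: "card {i\<in>F. i < a0} \<le> card {i\<in>F. i < q}" using cF_mono[OF fin] a0q by simp
    have m2: "card {i\<in>F. i < q} \<le> card {i\<in>F. i < b0}" using cF_mono[OF fin] b0q by simp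
    show ?thesis
    proof (cases "card {i\<in>F. i < q} = card {i\<in>F. i < a0}")
      case True
      define f where "f = a0"
      have fF: "f \<notin> F"
      proof
        assume "f \<in> F"
        then have "card {i\<in>F. i < Suc a0} = card {i\<in>F. i < a0} + 1"
          using cF_Suc[OF fin, of a0] by (simp add: f_def)
        moreover have "card {i\<in>F. i < Suc a0} \<le> card {i\<in>F. i < q}"
          using cF_mono[OF fin] a0q by simp
        ultimately show False using True by simp
      qed
      have "pinv (insert q A) (insert f F)"
      proof (rule pinv_insert[OF inv A(1) q fF])
        show "\<exists>a\<in>insert q A. f < a" using a0q by (auto simp: f_def)
        show "\<forall>a\<in>A. (f < a) = (q < a)" using gap a0q b0q q f_def by fastforce
        show "card {i\<in>F. i < q} + (if f < q then 1 else 0) = card {j\<in>A. j \<le> q}"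
          using True invc[OF a0A] cAq a0q by (simp add: f_def)
      qed
      moreover have "Suc f \<notin> A" using gap a0q b0q q by (fastforce simp: f_def)
      moreover have "\<forall>j. j \<notin> F \<and> ((j \<in> A \<and> Suc j = q) \<or> (j = q \<and> Suc j \<in> A)) \<longrightarrow> f = j"
      proof (intro allI impI)
        fix j assume j: "j \<notin> F \<and> ((j \<in> A \<and> Suc j = q) \<or> (j = q \<and> Suc j \<in> A))"
        show "f = j"
        proof (cases "j \<in> A \<and> Suc j = q")
          case True
          then show ?thesis using a0max[of j] a0q by (simp add: f_def)
        next
          case False
          then have jq: "j = q" "Suc q \<in> A" using j by auto
          then have "b0 = Suc q" using b0min[of "Suc q"] b0q by simp
          then have "card {i\<in>F. i < b0} = card {i\<in>F. i < q}"
            using cF_Suc[OF fin, of q] j jq by simp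
          then show ?thesis using cFb True by simp
        qed
      qed
      ultimately show ?thesis using fF a0A a0q unfolding f_def by blast
    next
      case False
      then have cq1: "card {i\<in>F. i < q} = card {i\<in>F. i < a0} + 1" using m1 m2 cFb by simp
      define f where "f = b0 - 1"
      have bf: "b0 = Suc f" using b0q by (simp add: f_def)
      have qf: "q \<le> f" using b0q bf by simp
      have fF: "f \<notin> F"
      proof
        assume "f \<in> F"
        then have "card {i\<in>F. i < b0} = card {i\<in>F. i < f} + 1"
          using cF_Suc[OF fin, of f] bf by simp
        moreover have "card {i\<in>F. i < q} \<le> card {i\<in>F. i < f}"
          using cF_mono[OF fin] qf by simp
        ultimately show False using cq1 cFb by simp
      qed
      have "pinv (insert q A) (insert f F)"
      proof (rule pinv_insert[OF inv A(1) q fF])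
        show "\<exists>a\<in>insert q A. f < a" using b0A bf by auto
        show "\<forall>a\<in>A. (f < a) = (q < a)" using gap a0q b0q q bf qf by fastforce
        show "card {i\<in>F. i < q} + (if f < q then 1 else 0) = card {j\<in>A. j \<le> q}"
          using cq1 invc[OF a0A] cAq qf by simp
      qed
      moreover have "f \<notin> A" using gap a0q b0q q bf qf by fastforce
      moreover have "\<forall>j. j \<notin> F \<and> ((j \<in> A \<and> Suc j = q) \<or> (j = q \<and> Suc j \<in> A)) \<longrightarrow> f = j"
      proof (intro allI impI)
        fix j assume j: "j \<notin> F \<and> ((j \<in> A \<and> Suc j = q) \<or> (j = q \<and> Suc j \<in> A))"
        show "f = j"
        proof (cases "j \<in> A \<and> Suc j = q")
          case True
          then have "j = a0" using a0max[of j] a0q by simp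
          then have "card {i\<in>F. i < q} = card {i\<in>F. i < a0}"
            using cF_Suc[OF fin, of a0] j True by simp
          then show ?thesis using cq1 by simp
        next
          case False
          then have jq: "j = q" "Suc q \<in> A" using j by auto
          then have "b0 = Suc q" using b0min[of "Suc q"] b0q by simp
          then show ?thesis using bf jq by simp
        qed
      qed
      ultimately show ?thesis using fF b0A bf by auto
    qed
  qed
qed

lemma sum_insert_le:
  assumes "finite T" "0 \<le> w e"
  shows "sum w (insert e T) \<le> sum w T + (w e :: real)"
  using assms by (cases "e \<in> T") (auto simp: insert_absorb)

lemma prim_inv:
  assumes pr: "prim_reach W I X w r S T"
  and W: "W = c ` {..<m}" and inj: "inj_on c {..<m}"
  and Ip: "\<And>x y. {x,y} \<in> I \<Longrightarrow> x \<in> W \<Longrightarrow> y \<in> W \<Longrightarrow> \<exists>j. Suc j < m \<and> {x,y} = {c j, c (Suc j)}"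
  and Xp: "\<And>j. Suc j < m \<Longrightarrow> {c j, c (Suc j)} \<notin> X"
  and wnn: "\<And>x y. x \<in> W \<Longrightarrow> y \<in> W \<Longrightarrow> x \<noteq> y \<Longrightarrow> 0 \<le> w {x,y}"
  shows "S \<subseteq> W \<and> finite T \<and> (\<exists>F. pinv {i. i < m \<and> c i \<in> S} F
    \<and> (\<forall>i\<in>F. {c i, c (Suc i)} \<in> I \<longrightarrow> c i \<in> S \<and> c (Suc i) \<in> S)
    \<and> sum w T \<le> (\<Sum>i\<in>F. w {c i, c (Suc i)}))"
  using pr
proof (induction rule: prim_reach.induct)
  case start
  then obtain q0 where q0: "q0 < m" "r = c q0" using W by auto
  have "{i. i < m \<and> c i \<in> {r}} = {q0}" using q0 inj_onD[OF inj, of _ q0] by auto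
  moreover have "{j. j = q0 \<and> j \<le> q0} = {q0}" by auto
  then have "pinv {q0} {}" by (simp add: pinv_def)
  ultimately show ?case using start by auto
next
  case (step S T u v)
  from step.IH obtain F where SW: "S \<subseteq> W" and finT: "finite T"
    and inv: "pinv {i. i < m \<and> c i \<in> S} F"
    and J: "\<forall>i\<in>F. {c i, c (Suc i)} \<in> I \<longrightarrow> c i \<in> S \<and> c (Suc i) \<in> S"
    and sw: "sum w T \<le> (\<Sum>i\<in>F. w {c i, c (Suc i)})" by blast
  define A where "A = {i. i < m \<and> c i \<in> S}"
  have finF: "finite F" using inv by (simp add: pinv_def)
  have finA: "finite A" by (simp add: A_def)
  obtain a where a: "a < m" "u = c a" using step.hyps SW W by auto
  have aA: "a \<in> A" using a step.hyps by (simp add: A_def)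
  have Ane: "A \<noteq> {}" using aA by auto
  obtain q where q: "q < m" "v = c q" using step.hyps W by auto
  have qA: "q \<notin> A" using q step.hyps by (simp add: A_def)
  have A': "{i. i < m \<and> c i \<in> insert v S} = insert q A"
  proof (intro set_eqI iffI)
    fix i assume "i \<in> {i. i < m \<and> c i \<in> insert v S}"
    then show "i \<in> insert q A" using inj_onD[OF inj, of i q] q by (auto simp: A_def)
  qed (use q in \<open>auto simp: A_def\<close>)
  obtain f where fF: "f \<notin> F" and inv': "pinv (insert q A) (insert f F)"
    and cross: "(f \<in> A) \<noteq> (Suc f \<in> A)" and bel: "\<exists>a\<in>insert q A. f < a"
    and uniq: "\<forall>j. j \<notin> F \<and> ((j \<in> A \<and> Suc j = q) \<or> (j = q \<and> Suc j \<in> A)) \<longrightarrow> f = j"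
    using comb[OF inv[folded A_def] finA Ane qA] by blast
  have fm: "Suc f < m" using bel q by (auto simp: A_def)
  have uv: "u \<noteq> v" using step.hyps by auto
  have key: "w {u,v} \<le> w {c f, c (Suc f)} \<and>
     ({c f, c (Suc f)} \<in> I \<longrightarrow> c f \<in> insert v S \<and> c (Suc f) \<in> insert v S)"
  proof (cases "{u,v} \<in> I")
    case True
    obtain j where j: "Suc j < m" "{u,v} = {c j, c (Suc j)}"
    proof -
      have "u \<in> W" "v \<in> W" using step.hyps(2,3) SW by auto
      then show ?thesis using Ip[OF True] that by blast
    qed
    have jF: "j \<notin> F"
    proof
      assume "j \<in> F"
      then have cs: "c j \<in> S \<and> c (Suc j) \<in> S" using J True j(2) by simp
      have "v \<in> {c j, c (Suc j)}" using j(2) by blast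
      then show False using cs step.hyps(3) by blast
    qed
    have jm: "j < m" "Suc j < m" using j(1) by auto
    have "(j \<in> A \<and> Suc j = q) \<or> (j = q \<and> Suc j \<in> A)"
    proof -
      have "(u = c j \<and> v = c (Suc j)) \<or> (u = c (Suc j) \<and> v = c j)"
        using j(2) by (simp add: doubleton_eq_iff)
      then show ?thesis
      proof
        assume h: "u = c j \<and> v = c (Suc j)"
        have e1: "c a = c j" using a(2) h by simp
        have e2: "c (Suc j) = c q" using q(2) h by simp
        have "a = j" by (rule inj_onD[OF inj e1]) (use a(1) jm in auto)
        moreover have "Suc j = q" by (rule inj_onD[OF inj e2]) (use q(1) jm in auto)
        ultimately show ?thesis using aA by simp
      next
        assume h: "u = c (Suc j) \<and> v = c j"
        have e1: "c a = c (Suc j)" using a(2) h by simp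
        have e2: "c j = c q" using q(2) h by simp
        have "a = Suc j" by (rule inj_onD[OF inj e1]) (use a(1) jm in auto)
        moreover have "j = q" by (rule inj_onD[OF inj e2]) (use q(1) jm in auto)
        ultimately show ?thesis using aA by simp
      qed
    qed
    then have fj: "f = j" using uniq jF by blast
    have pe: "{c f, c (Suc f)} = {u,v}" using fj j(2) by simp
    have sub: "{u,v} \<subseteq> insert v S" using step.hyps(2) by auto
    have "c f \<in> {c f, c (Suc f)}" "c (Suc f) \<in> {c f, c (Suc f)}" by auto
    then have "c f \<in> insert v S \<and> c (Suc f) \<in> insert v S" using pe sub by blast
    then show ?thesis using pe by simp
  next
    case False
    then have H: "\<forall>a\<in>S. \<forall>b\<in>W - S. {a, b} \<notin> X \<longrightarrow> {a, b} \<notin> I \<and> w {u, v} \<le> w {a, b}"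
      using step.hyps by blast
    have cW: "c f \<in> W" "c (Suc f) \<in> W" using fm W by auto
    show ?thesis
    proof (cases "f \<in> A")
      case True
      then have "c f \<in> S" "c (Suc f) \<notin> S" using cross fm by (auto simp: A_def)
      then show ?thesis using H Xp[OF fm] cW by auto
    next
      case False
      then have "c (Suc f) \<in> S" "c f \<notin> S" using cross fm by (auto simp: A_def)
      moreover have ee: "{c (Suc f), c f} = {c f, c (Suc f)}" by auto
      ultimately have s1: "c (Suc f) \<in> S" "c f \<in> W - S" "{c (Suc f), c f} \<notin> X"
        using Xp[OF fm] cW by auto
      have "{c (Suc f), c f} \<notin> I \<and> w {u, v} \<le> w {c (Suc f), c f}"
        using H s1 by blast
      then show ?thesis unfolding ee by simp
    qed
  qed
  have w0: "0 \<le> w {u,v}" using wnn uv step.hyps SW by auto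
  have "sum w (insert {u,v} T) \<le> sum w T + w {u,v}" by (rule sum_insert_le[of T w "{u,v}", OF finT w0])
  also have "\<dots> \<le> (\<Sum>i\<in>F. w {c i, c (Suc i)}) + w {c f, c (Suc f)}" using sw key by simp
  also have "\<dots> = (\<Sum>i\<in>insert f F. w {c i, c (Suc i)})" using finF fF by simp
  finally have sw': "sum w (insert {u,v} T) \<le> (\<Sum>i\<in>insert f F. w {c i, c (Suc i)})" .
  have J': "\<forall>i\<in>insert f F. {c i, c (Suc i)} \<in> I \<longrightarrow> c i \<in> insert v S \<and> c (Suc i) \<in> insert v S"
    using J key by auto
  have "insert v S \<subseteq> W" using SW step.hyps by auto
  moreover have "finite (insert {u,v} T)" using finT by simp
  moreover have "pinv {i. i < m \<and> c i \<in> insert v S} (insert f F)" unfolding A' by (rule inv')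
  ultimately show ?case using J' sw' by blast
qed

theorem lemma2:
  fixes V :: "'a set" and v1 :: 'a and w :: "'a set \<Rightarrow> real"
    and I X T :: "'a set set" and g :: "'a list"
  assumes "finite V" and "v1 \<in> V"
    and "\<forall>e\<in>edges_of V. w e \<ge> 0"
    and "I \<subseteq> edges_of V" and "X \<subseteq> edges_of V" and "I \<inter> X = {}"
    and "ham_cycle V g" and "I \<subseteq> cycle_edges g" and "X \<inter> cycle_edges g = {}"
    and "constrained_mst (V - {v1}) I X w T"
  shows "(\<Sum>e\<in>T. w e) \<le> (\<Sum>e\<in>cycle_edges g. w e)"
proof -
  obtain r where pr: "prim_reach (V - {v1}) I X w r (V - {v1}) T"
    using assms(10) unfolding constrained_mst_def by blast
  define n where "n = length g"
  have dist: "distinct g" and setg: "set g = V" and n3: "3 \<le> n"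
    using assms(7) by (auto simp: ham_cycle_def n_def)
  obtain p where p: "p < n" "g ! p = v1" using assms(2) setg by (metis in_set_conv_nth n_def)
  define k where "k i = (Suc p + i) mod n" for i
  define c where "c i = g ! k i" for i
  define m where "m = n - 1"
  have kn: "k i < n" for i using n3 by (simp add: k_def)
  have kinv: "(k i + (n - Suc p)) mod n = i" if "i < n" for i
  proof -
    have "(k i + (n - Suc p)) mod n = (Suc p + i + (n - Suc p)) mod n" by (simp add: k_def mod_add_left_eq)
    also have "Suc p + i + (n - Suc p) = i + n" using p by simp
    finally show ?thesis using that by simp
  qed
  have kk: "k ((t + (n - Suc p)) mod n) = t" if "t < n" for t
  proof -
    have "k ((t + (n - Suc p)) mod n) = (Suc p + (t + (n - Suc p))) mod n" unfolding k_def by (rule mod_add_right_eq)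
    also have "Suc p + (t + (n - Suc p)) = t + n" using p by simp
    finally show ?thesis using that by simp
  qed
  have kSuc: "k (Suc j) = (k j + 1) mod n" for j
    unfolding k_def by (simp add: mod_Suc_eq)
  have cinj: "inj_on c {..<n}"
  proof (rule inj_onI)
    fix i j assume ij: "i \<in> {..<n}" "j \<in> {..<n}" "c i = c j"
    then have "k i = k j" using dist kn by (simp add: c_def nth_eq_iff_index_eq n_def)
    then show "i = j" using kinv ij by (metis lessThan_iff)
  qed
  have mn: "n = Suc m" using n3 by (simp add: m_def)
  have cm: "c m = v1"
  proof -
    have "k m = (p + n) mod n" unfolding k_def using mn by simp
    then show ?thesis using p by (simp add: c_def)
  qed
  have cimg: "c ` {..<n} = V"
  proof
    show "c ` {..<n} \<subseteq> V" using kn setg by (auto simp: c_def n_def)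
  next
    show "V \<subseteq> c ` {..<n}"
    proof
      fix x assume "x \<in> V"
      then obtain t where t: "t < n" "x = g ! t" using setg by (metis in_set_conv_nth n_def)
      then have "x = c ((t + (n - Suc p)) mod n)" using kk by (simp add: c_def)
      moreover have "(t + (n - Suc p)) mod n < n" using n3 by simp
      ultimately show "x \<in> c ` {..<n}" by blast
    qed
  qed
  have injm: "inj_on c {..<m}" using cinj by (rule inj_on_subset) (auto simp: mn)
  have W: "V - {v1} = c ` {..<m}"
  proof -
    have "{..<n} = insert m {..<m}" using mn by auto
    then have "V = insert v1 (c ` {..<m})" using cimg cm by auto
    moreover have "v1 \<notin> c ` {..<m}"
    proof
      assume "v1 \<in> c ` {..<m}"
      then obtain i where "i < m" "c i = c m" using cm by auto
      then show False using inj_onD[OF cinj, of i m] mn by auto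
    qed
    ultimately show ?thesis by auto
  qed
  have ce: "cycle_edges g = (\<lambda>t. {g ! t, g ! ((t + 1) mod n)}) ` {..<n}"
    by (auto simp: cycle_edges_def n_def)
  have pe_ce: "{c j, c (Suc j)} \<in> cycle_edges g" for j
    unfolding ce c_def kSuc using kn by auto
  have Xp: "\<And>j. Suc j < m \<Longrightarrow> {c j, c (Suc j)} \<notin> X" using pe_ce assms(9) by auto
  have Ip: "\<exists>j. Suc j < m \<and> {x,y} = {c j, c (Suc j)}"
    if xy: "{x,y} \<in> I" "x \<in> V - {v1}" "y \<in> V - {v1}" for x y
  proof -
    have "{x,y} \<in> cycle_edges g" using xy assms(8) by auto
    then obtain t where t: "t < n" "{x,y} = {g ! t, g ! ((t + 1) mod n)}" unfolding ce by auto
    define j where "j = (t + (n - Suc p)) mod n"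
    have jn: "j < n" using n3 by (simp add: j_def)
    have cj: "c j = g ! t" using kk[OF t(1)] by (simp add: c_def j_def)
    have cSj: "c (Suc j) = g ! ((t + 1) mod n)" using kk[OF t(1)] kSuc[of j] by (simp add: c_def j_def)
    have e: "{x,y} = {c j, c (Suc j)}" using t cj cSj by simp
    have nv: "v1 \<notin> {x,y}" using xy by auto
    have "j \<noteq> m" using nv e cm by auto
    moreover have "Suc j \<noteq> m" using nv e cm by auto
    ultimately have "Suc j < m" using jn mn by linarith
    then show ?thesis using e by blast
  qed
  have wnn: "0 \<le> w {x,y}" if "x \<in> V - {v1}" "y \<in> V - {v1}" "x \<noteq> y" for x y
  proof -
    have "{x,y} \<in> edges_of V" using that by (auto simp: edges_of_def)
    then show ?thesis using assms(3) by auto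
  qed
  note IH = prim_inv[OF pr W injm Ip Xp wnn]
  then obtain F where inv: "pinv {i. i < m \<and> c i \<in> V - {v1}} F"
    and sw: "sum w T \<le> (\<Sum>i\<in>F. w {c i, c (Suc i)})" by blast
  have Aall: "{i. i < m \<and> c i \<in> V - {v1}} = {..<m}" using W by auto
  have finF: "finite F" using inv by (simp add: pinv_def)
  have Fsub: "F \<subseteq> {..<m-1}" using inv unfolding Aall pinv_def by fastforce
  have m2: "m - 1 < m" using n3 mn by simp
  have "card {i\<in>F. i < m - 1} + 1 = card {j\<in>{..<m}. j \<le> m - 1}"
    using inv m2 unfolding Aall pinv_def by blast
  moreover have "{i\<in>F. i < m - 1} = F" using Fsub by auto
  moreover have "{j\<in>{..<m}. j \<le> m - 1} = {..<m}" using m2 by auto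
  ultimately have "card F = m - 1" using m2 by simp
  then have Feq: "F = {..<m-1}" using Fsub by (intro card_subset_eq) auto
  define pe where "pe i = {c i, c (Suc i)}" for i
  have peinj: "inj_on pe {..<m-1}"
  proof (rule inj_onI)
    fix i j assume ij: "i \<in> {..<m-1}" "j \<in> {..<m-1}" "pe i = pe j"
    have lt: "i < n" "Suc i < n" "j < n" "Suc j < n" using ij(1,2) mn by auto
    from ij(3) have "(c i = c j \<and> c (Suc i) = c (Suc j)) \<or> (c i = c (Suc j) \<and> c (Suc i) = c j)"
      by (simp add: pe_def doubleton_eq_iff)
    then show "i = j"
    proof
      assume "c i = c j \<and> c (Suc i) = c (Suc j)"
      then show "i = j" using inj_onD[OF cinj, of i j] lt by auto
    next
      assume h: "c i = c (Suc j) \<and> c (Suc i) = c j"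
      then have "i = Suc j" using inj_onD[OF cinj, of i "Suc j"] lt by auto
      moreover have "Suc i = j" using h inj_onD[OF cinj, of "Suc i" j] lt by auto
      ultimately show "i = j" by simp
    qed
  qed
  have "(\<Sum>i\<in>F. w {c i, c (Suc i)}) = sum w (pe ` {..<m-1})"
    unfolding Feq sum.reindex[OF peinj] by (simp add: pe_def)
  also have "\<dots> \<le> sum w (cycle_edges g)"
  proof (rule sum_mono2)
    show "finite (cycle_edges g)" unfolding ce by simp
    show "pe ` {..<m - 1} \<subseteq> cycle_edges g" using pe_ce by (auto simp: pe_def)
    fix e assume "e \<in> cycle_edges g - pe ` {..<m - 1}"
    then obtain t where t: "t < n" "e = {g ! t, g ! ((t + 1) mod n)}" unfolding ce by auto
    have t1: "(t + 1) mod n < n" using n3 by simp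
    have "t \<noteq> (t + 1) mod n"
    proof (cases "t + 1 < n")
      case True then show ?thesis by simp
    next
      case False then have "t + 1 = n" using t by simp
      then show ?thesis using n3 by simp
    qed
    then have "g ! t \<noteq> g ! ((t + 1) mod n)" using dist t t1 by (simp add: nth_eq_iff_index_eq n_def)
    moreover have "g ! t \<in> V" "g ! ((t + 1) mod n) \<in> V" using t t1 setg by (auto simp: n_def)
    ultimately have "e \<in> edges_of V" using t by (auto simp: edges_of_def)
    then show "0 \<le> w e" using assms(3) by auto
  qed
  finally show ?thesis using sw by simp
qed

end
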